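(* Let $R$ be a regular ring with unity and let $e_1,\dots,e_n$ be idempotents of $R$ with $e_ie_j=0$ for all $i\ne j$. Then the following are equivalent: (i) $e_1+e_2+\dots+e_n=1$; (ii) if $e$ is an idempotent of $R$ with $e_i\,\omega\,e$ for every $i=1,\dots,n$, then $e=1$.
   Context: A ring is regular if for every $x$ there is $y$ with $xyx=x$. For idempotents, $f\,\omega\,e$ means $fe=f=ef$. *)

theory Defs
  imports Main
begin

definition regular_ring :: "'a::ring_1 itself \<Rightarrow> bool" where
  "regular_ring _ \<longleftrightarrow> (\<forall>x::'a. \<exists>y. x * y * x = x)"

definition idempotent :: "'a::ring_1 \<Rightarrow> bool" where
  "idempotent e \<longleftrightarrow> e * e = e"

definition omega_le :: "'a::ring_1 \<Rightarrow> 'a \<Rightarrow> bool" (infix "\<omega>" 50) where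
  "f \<omega> e \<longleftrightarrow> f * e = f \<and> e * f = f"

end

theory Submission
  imports Defs
begin

theorem proposition4p1:
  fixes es :: "nat \<Rightarrow> 'a::ring_1" and n :: nat
  assumes "regular_ring TYPE('a)"
    and "\<And>i. i \<in> {1..n} \<Longrightarrow> idempotent (es i)"
    and "\<And>i j. i \<in> {1..n} \<Longrightarrow> j \<in> {1..n} \<Longrightarrow> i \<noteq> j \<Longrightarrow> es i * es j = 0"
  shows "(\<Sum>i=1..n. es i) = 1 \<longleftrightarrow>
         (\<forall>e. idempotent e \<longrightarrow> (\<forall>i\<in>{1..n}. es i \<omega> e) \<longrightarrow> e = 1)"
proof -
  define s where "s = (\<Sum>i=1..n. es i)"
  have L: "es i * s = es i" if i: "i \<in> {1..n}" for i
  proof -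
    have "es i * s = (\<Sum>j\<in>{1..n}. es i * es j)" by (simp add: s_def sum_distrib_left)
    also have "\<dots> = (\<Sum>j\<in>{1..n}. if j = i then es i else 0)"
      using assms(2,3) i by (intro sum.cong) (auto simp: idempotent_def)
    also have "\<dots> = es i" using i by simp
    finally show ?thesis .
  qed
  have R: "s * es i = es i" if i: "i \<in> {1..n}" for i
  proof -
    have "s * es i = (\<Sum>j\<in>{1..n}. es j * es i)" by (simp add: s_def sum_distrib_right)
    also have "\<dots> = (\<Sum>j\<in>{1..n}. if j = i then es i else 0)"
      using assms(2,3) i by (intro sum.cong) (auto simp: idempotent_def)
    also have "\<dots> = es i" using i by simp
    finally show ?thesis .
  qed
  have S: "s * s = s"
  proof -
    have "s * s = (\<Sum>i\<in>{1..n}. es i * s)" by (simp add: s_def[of] sum_distrib_right)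
    also have "\<dots> = s" using L by (simp add: s_def)
    finally show ?thesis .
  qed
  show ?thesis unfolding s_def[symmetric]
  proof
    assume "s = 1"
    show "\<forall>e. idempotent e \<longrightarrow> (\<forall>i\<in>{1..n}. es i \<omega> e) \<longrightarrow> e = 1"
    proof (intro allI impI)
      fix e :: 'a assume "\<forall>i\<in>{1..n}. es i \<omega> e"
      hence "s * e = s" by (simp add: s_def sum_distrib_right omega_le_def)
      thus "e = 1" using \<open>s = 1\<close> by simp
    qed
  next
    assume H: "\<forall>e. idempotent e \<longrightarrow> (\<forall>i\<in>{1..n}. es i \<omega> e) \<longrightarrow> e = 1"
    show "s = 1" using H[rule_format, of s] S L R by (auto simp: idempotent_def omega_le_def)
  qed
qed

end
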